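(* Let $q\ge 2$ and let $R\subseteq\mathbb{Z}[\tfrac1q]\rtimes\mathbb{Z}$ be a rational subset. If $R\subseteq\mathbb{Z}[\tfrac1q]\times\{0\}$, then there is $k\in\mathbb{N}$ with $R\subseteq\tfrac{1}{q^k}\mathbb{Z}\times\{0\}$.
   Context: $\mathbb{Z}[\tfrac1q]\rtimes\mathbb{Z}$ is the group of pairs $(r,m)$, $r\in\mathbb{Z}[\tfrac1q]=\{nq^i:n,i\in\mathbb{Z}\}$, $m\in\mathbb{Z}$, with $(r,m)(r',m')=(r+q^m r',m+m')$, generated by $(\pm1,0),(0,\pm1)$. A subset is rational if it is accepted by a finite automaton whose edges are labelled by these generators, i.e. it is the set of products of edge labels along runs from an initial to a final state. *)

theory Defs
  imports Main "HOL.Rat"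
begin

text \<open>Elements of Z[1/q] \<rtimes> Z are represented as pairs (r, m) of a rational r and an
integer m, where r is required to lie in Z[1/q].\<close>

definition Zinvq :: "int \<Rightarrow> rat set" where
  "Zinvq q = {r. \<exists>n i. r = of_int n * (of_int q) powi i}"

definition BS :: "int \<Rightarrow> (rat \<times> int) set" where
  "BS q = Zinvq q \<times> UNIV"

definition bsmul :: "int \<Rightarrow> rat \<times> int \<Rightarrow> rat \<times> int \<Rightarrow> rat \<times> int" where
  "bsmul q x y = (fst x + (of_int q) powi (snd x) * fst y, snd x + snd y)"

definition bsgens :: "(rat \<times> int) set" where
  "bsgens = {(1, 0), (-1, 0), (0, 1), (0, -1)}"

inductive reach :: "int \<Rightarrow> (nat \<times> (rat \<times> int) \<times> nat) set \<Rightarrow> nat \<Rightarrow> rat \<times> int \<Rightarrow> nat \<Rightarrow> bool"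
  for q E where
  refl: "reach q E s (0, 0) s"
| step: "reach q E s g t \<Longrightarrow> (t, a, u) \<in> E \<Longrightarrow> reach q E s (bsmul q g a) u"

definition accepted :: "int \<Rightarrow> (nat \<times> (rat \<times> int) \<times> nat) set \<Rightarrow> nat set \<Rightarrow> nat set \<Rightarrow> (rat \<times> int) set" where
  "accepted q E I F = {g. \<exists>s\<in>I. \<exists>t\<in>F. reach q E s g t}"

definition rational_subset :: "int \<Rightarrow> (rat \<times> int) set \<Rightarrow> bool" where
  "rational_subset q R \<longleftrightarrow> (\<exists>E I F. finite E \<and> finite I \<and> finite F \<and>
      (\<forall>(s, a, t)\<in>E. a \<in> bsgens) \<and> R = accepted q E I F)"

end

theory Submission
  imports Defs
begin

lemma bsmul_assoc:
  assumes "q \<noteq> 0"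
  shows "bsmul q (bsmul q x y) z = bsmul q x (bsmul q y z)"
  using assms by (simp add: bsmul_def power_int_add algebra_simps)

lemma reach_trans:
  assumes "q \<noteq> 0"
  shows "reach q E t g' u \<Longrightarrow> reach q E s g t \<Longrightarrow> reach q E s (bsmul q g g') u"
proof (induction rule: reach.induct)
  case (refl s')
  then show ?case by (simp add: bsmul_def)
next
  case (step s' g'' v a u)
  then have "reach q E s (bsmul q (bsmul q g g'') a) u" by (blast intro: reach.step)
  then show ?case using bsmul_assoc[OF assms] by simp
qed

lemma reach_target:
  "reach q E s g t \<Longrightarrow> t = s \<or> t \<in> (\<lambda>e. snd (snd e)) ` E"
  by (induction rule: reach.induct) force+

lemma powi_shift:
  fixes q :: int and m :: int and B :: nat
  assumes "q \<noteq> 0" "m \<ge> - int B"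
  shows "(of_int q :: rat) powi m = of_int (q ^ nat (m + int B)) / of_int q ^ B"
proof -
  have "(of_int q :: rat) powi (m + int B) = of_int q powi m * of_int q powi (int B)"
    using assms by (simp add: power_int_add)
  moreover have "(of_int q :: rat) powi (m + int B) = of_int q ^ nat (m + int B)"
    using assms(2) by (metis le_add_same_cancel2 power_int_of_nat nat_0_le add.commute
        diff_ge_0_iff_ge diff_minus_eq_add)
  ultimately show ?thesis using assms(1) by (simp add: field_simps)
qed

theorem mainTheorem7:
  fixes q :: int and R :: "(rat \<times> int) set"
  assumes "q \<ge> 2"
    and "rational_subset q R"
    and "R \<subseteq> Zinvq q \<times> {0}"
  shows "\<exists>k::nat. R \<subseteq> {(of_int n / (of_int q) ^ k, 0) | n. True}"
proof -
  have q0: "q \<noteq> 0" using assms(1) by simp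
  obtain E I F where fE: "finite E" and fI: "finite I" and lab: "\<forall>(s, a, t)\<in>E. a \<in> bsgens"
    and R: "R = accepted q E I F"
    using assms(2) unfolding rational_subset_def by blast
  define coacc where "coacc t \<longleftrightarrow> (\<exists>f\<in>F. \<exists>g'. reach q E t g' f)" for t
  define H where "H = {snd g | g. \<exists>s\<in>I. \<exists>t. reach q E s g t \<and> coacc t}"
  define Sts where "Sts = I \<union> (\<lambda>e. snd (snd e)) ` E"
  have zero: "snd g = 0" if "g \<in> R" for g using that assms(3) by auto
  have uniq: "snd g1 = snd g2" if hh: "s1 \<in> I" "s2 \<in> I" "reach q E s1 g1 t" "reach q E s2 g2 t"
    "coacc t" for s1 s2 g1 g2 t
  proof -
    obtain f g' where f: "f \<in> F" "reach q E t g' f" using hh(5) coacc_def by blast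
    have "bsmul q g1 g' \<in> R" unfolding R accepted_def
      using reach_trans[OF q0 f(2) hh(3)] hh(1) f(1) by blast
    moreover have "bsmul q g2 g' \<in> R" unfolding R accepted_def
      using reach_trans[OF q0 f(2) hh(4)] hh(2) f(1) by blast
    ultimately have "snd (bsmul q g1 g') = 0" "snd (bsmul q g2 g') = 0" using zero by blast+
    then show ?thesis by (simp add: bsmul_def)
  qed
  have Hsub: "H \<subseteq> (\<Union>t\<in>Sts. {snd g | g. \<exists>s\<in>I. reach q E s g t \<and> coacc t})"
    unfolding H_def Sts_def using reach_target by fastforce
  have "finite {snd g | g. \<exists>s\<in>I. reach q E s g t \<and> coacc t}" for t
  proof (cases "{snd g | g. \<exists>s\<in>I. reach q E s g t \<and> coacc t} = {}")
    case True then show ?thesis by (metis finite.emptyI)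
  next
    case False
    then obtain x where x: "x \<in> {snd g | g. \<exists>s\<in>I. reach q E s g t \<and> coacc t}" by blast
    have "{snd g | g. \<exists>s\<in>I. reach q E s g t \<and> coacc t} \<subseteq> {x}"
      using x uniq by blast
    then show ?thesis using finite_subset by blast
  qed
  moreover have "finite Sts" unfolding Sts_def using fI fE by simp
  ultimately have fH: "finite H" using Hsub finite_subset by (meson finite_UN_I)
  obtain B :: nat where B: "\<forall>x\<in>H. x \<ge> - int B"
  proof -
    have "\<forall>x\<in>H. x \<ge> - int (nat (\<Sum>y\<in>H. \<bar>y\<bar>))"
    proof
      fix x assume "x \<in> H"
      then have "\<bar>x\<bar> \<le> (\<Sum>y\<in>H. \<bar>y\<bar>)"
        using fH by (metis abs_ge_zero sum_nonneg_leq_bound order_refl member_le_sum)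
      then show "x \<ge> - int (nat (\<Sum>y\<in>H. \<bar>y\<bar>))" by linarith
    qed
    then show ?thesis using that by blast
  qed
  have gens: "fst a \<in> {0, 1, -1}" if hg: "(t, a, u) \<in> E" for t a u
    using lab hg unfolding bsgens_def by fastforce
  have coacc_back: "coacc t" if hc: "(t, a, u) \<in> E" "coacc u" for t a u
  proof -
    obtain f g' where f: "f \<in> F" "reach q E u g' f" using hc(2) coacc_def by blast
    have "reach q E t (bsmul q (0,0) a) u" using hc(1) by (blast intro: reach.intros)
    then show ?thesis using reach_trans[OF q0 f(2)] f(1) coacc_def by blast
  qed
  have main: "s \<in> I \<Longrightarrow> coacc t \<Longrightarrow> \<exists>n. fst g = of_int n / of_int q ^ B"
    if hr: "reach q E s g t" for s g t
    using hr
  proof (induction rule: reach.induct)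
    case (refl s) then show ?case by (intro exI[of _ 0]) simp
  next
    case (step s g t a u)
    have ct: "coacc t" using coacc_back step by blast
    obtain n where n: "fst g = of_int n / of_int q ^ B" using step ct by blast
    have "snd g \<in> H" unfolding H_def using step ct by blast
    then have sg: "snd g \<ge> - int B" using B by blast
    obtain c :: int where c: "fst a = of_int c" using gens[OF step(2)] by (metis insertE empty_iff of_int_0 of_int_1 of_int_minus)
    have "fst (bsmul q g a) = of_int n / of_int q ^ B + of_int (q ^ nat (snd g + int B)) / of_int q ^ B * of_int c"
      using n c powi_shift[OF q0 sg] by (simp add: bsmul_def)
    also have "\<dots> = of_int (n + q ^ nat (snd g + int B) * c) / of_int q ^ B"
      by (simp add: add_divide_distrib)
    finally show ?case by blast
  qed
  have "R \<subseteq> {(of_int n / (of_int q) ^ B, 0) | n. True}"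
  proof
    fix g assume g: "g \<in> R"
    then obtain s f where sf: "s \<in> I" "f \<in> F" "reach q E s g f" unfolding R accepted_def by blast
    have cf: "coacc f" unfolding coacc_def using sf(2) reach.refl by blast
    obtain n where n: "fst g = of_int n / of_int q ^ B" using main[OF sf(3) sf(1) cf] by blast
    have "snd g = 0" using zero g by blast
    then have "g = (of_int n / (of_int q) ^ B, 0)" using n by (cases g) simp
    then show "g \<in> {(of_int n / (of_int q) ^ B, 0) | n. True}" by blast
  qed
  then show ?thesis by blast
qed

end
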